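(* If $\bar x\in\operatorname{dom}\varphi$ is a local minimizer of $\varphi:\mathbb{R}^n\to(-\infty,\infty]$, then $0\in\partial\varphi(\bar x)$. If in addition $\varphi$ is prox-regular at $\bar x$ for $0$, then $$\langle z,w\rangle\ge0\quad\text{whenever } w\in\mathbb{R}^n \text{ and } z\in\breve\partial^2\varphi(\bar x,0)(w).$$
   Context: Regular subdifferential $\widehat\partial\varphi(x):=\{v:\liminf_{u\to x}\frac{\varphi(u)-\varphi(x)-\langle v,u-x\rangle}{\|u-x\|}\ge0\}$; limiting subdifferential $\partial\varphi(\bar x)$: all limits of $v_k\in\widehat\partial\varphi(x_k)$ with $x_k\to\bar x$, $\varphi(x_k)\to\varphi(\bar x)$. Regular normal cone $\widehat N_\Omega(\bar z):=\widehat\partial\delta_\Omega(\bar z)$ ($\delta_\Omega$ the indicator function). Regular coderivative of $F:\mathbb{R}^n\rightrightarrows\mathbb{R}^m$: $\widehat D^*F(\bar x,\bar y)(u):=\{v:(v,-u)\in\widehat N_{\operatorname{gph}F}(\bar x,\bar y)\}$. Combined second-order subdifferential: $\breve\partial^2\varphi(\bar x,\bar v)(u):=\widehat D^*(\partial\varphi)(\bar x,\bar v)(u)$. Prox-regularity of $\varphi$ at $\bar x$ for $\bar v\in\partial\varphi(\bar x)$: $\varphi$ finite and locally l.s.c. around $\bar x$, and there are $\varepsilon>0$, $r\ge0$ with $\varphi(x)\ge\varphi(u)+\langle v,x-u\rangle-\frac r2\|x-u\|^2$ for all $\|x-\bar x\|<\varepsilon$ and all $v\in\partial\varphi(u)$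 with $\|v-\bar v\|<\varepsilon$, $\|u-\bar x\|<\varepsilon$, $\varphi(u)<\varphi(\bar x)+\varepsilon$. *)

theory Defs
  imports "HOL-Analysis.Analysis"
begin

definition edom :: "('a \<Rightarrow> ereal) \<Rightarrow> 'a set" where
  "edom \<phi> = {x. \<phi> x < \<infinity>}"

definition local_minimizer :: "('a::metric_space \<Rightarrow> ereal) \<Rightarrow> 'a \<Rightarrow> bool" where
  "local_minimizer \<phi> xb \<longleftrightarrow> (\<exists>\<epsilon>>0. \<forall>x. dist x xb < \<epsilon> \<longrightarrow> \<phi> xb \<le> \<phi> x)"

definition regular_subdiff :: "('a::real_inner \<Rightarrow> ereal) \<Rightarrow> 'a \<Rightarrow> 'a set" where
  "regular_subdiff \<phi> x = {v. \<bar>\<phi> x\<bar> \<noteq> \<infinity> \<and>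
     Liminf (at x) (\<lambda>u. (\<phi> u - \<phi> x - ereal (inner v (u - x))) / ereal (norm (u - x))) \<ge> 0}"

definition lim_subdiff :: "('a::real_inner \<Rightarrow> ereal) \<Rightarrow> 'a \<Rightarrow> 'a set" where
  "lim_subdiff \<phi> xb = {v. \<bar>\<phi> xb\<bar> \<noteq> \<infinity> \<and>
     (\<exists>xs vs. xs \<longlonglongrightarrow> xb \<and> (\<lambda>k. \<phi> (xs k)) \<longlonglongrightarrow> \<phi> xb \<and>
        (\<forall>k. vs k \<in> regular_subdiff \<phi> (xs k)) \<and> vs \<longlonglongrightarrow> v)}"

definition indicator_fun :: "'a set \<Rightarrow> 'a \<Rightarrow> ereal" where
  "indicator_fun \<Omega> z = (if z \<in> \<Omega> then 0 else \<infinity>)"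

definition regular_normal_cone :: "'a::real_inner set \<Rightarrow> 'a \<Rightarrow> 'a set" where
  "regular_normal_cone \<Omega> z = regular_subdiff (indicator_fun \<Omega>) z"

definition graph_of :: "('a \<Rightarrow> 'b set) \<Rightarrow> ('a \<times> 'b) set" where
  "graph_of F = {(x, y). y \<in> F x}"

definition regular_coderiv ::
  "('a::real_inner \<Rightarrow> 'b::real_inner set) \<Rightarrow> 'a \<Rightarrow> 'b \<Rightarrow> 'b \<Rightarrow> 'a set" where
  "regular_coderiv F x y u = {v. (v, - u) \<in> regular_normal_cone (graph_of F) (x, y)}"

definition combined_second_subdiff ::
  "('a::real_inner \<Rightarrow> ereal) \<Rightarrow> 'a \<Rightarrow> 'a \<Rightarrow> 'a \<Rightarrow> 'a set" where
  "combined_second_subdiff \<phi> x v u = regular_coderiv (lim_subdiff \<phi>) x v u"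

text \<open>Local lower semicontinuity at \<open>xb\<close> (Rockafellar--Wets): the epigraph is closed
  relative to a neighbourhood of \<open>(xb, \<phi> xb)\<close>.\<close>
definition locally_lsc_at :: "('a::real_normed_vector \<Rightarrow> ereal) \<Rightarrow> 'a \<Rightarrow> bool" where
  "locally_lsc_at \<phi> xb \<longleftrightarrow> (\<exists>\<epsilon>>0.
     closed {(x, \<alpha>::real). dist x xb \<le> \<epsilon> \<and> \<alpha> \<le> real_of_ereal (\<phi> xb) + \<epsilon> \<and> \<phi> x \<le> ereal \<alpha>})"

definition prox_regular_at :: "('a::real_inner \<Rightarrow> ereal) \<Rightarrow> 'a \<Rightarrow> 'a \<Rightarrow> bool" where
  "prox_regular_at \<phi> xb vb \<longleftrightarrow> \<bar>\<phi> xb\<bar> \<noteq> \<infinity> \<and> locally_lsc_at \<phi> xb \<and>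
     (\<exists>\<epsilon>>0. \<exists>r\<ge>0. \<forall>x u v. norm (x - xb) < \<epsilon> \<and> v \<in> lim_subdiff \<phi> u \<and>
        norm (v - vb) < \<epsilon> \<and> norm (u - xb) < \<epsilon> \<and> \<phi> u < \<phi> xb + ereal \<epsilon> \<longrightarrow>
        \<phi> x \<ge> \<phi> u + ereal (inner v (x - u)) - ereal (r / 2 * (norm (x - u))\<^sup>2))"

end

theory Submission imports Defs begin

lemma regsub_from_quad:
  fixes \<phi> :: "'a::real_inner \<Rightarrow> ereal"
  assumes fin: "\<phi> u = ereal c" and rho: "\<rho> > 0" and L: "L \<ge> 0"
    and ineq: "\<And>x. dist x u < \<rho> \<Longrightarrow> \<phi> x \<ge> ereal (c + inner v (x - u) - L * (norm (x - u))\<^sup>2)"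
  shows "v \<in> regular_subdiff \<phi> u"
proof -
  have "0 \<le> Liminf (at u) (\<lambda>x. (\<phi> x - \<phi> u - ereal (inner v (x - u))) / ereal (norm (x - u)))"
  proof (subst le_Liminf_iff, intro allI impI)
    fix y :: ereal assume y: "y < 0"
    obtain e where e: "e > 0" "y < ereal (- e)"
    proof (cases y)
      case (real r) then show ?thesis using y that[of "- r / 2"] by auto
    next
      case PInf then show ?thesis using y by auto
    next
      case MInf then show ?thesis using that[of 1] by auto
    qed
    show "eventually (\<lambda>x. y < (\<phi> x - \<phi> u - ereal (inner v (x - u))) / ereal (norm (x - u))) (at u)"
      unfolding eventually_at
    proof (intro exI[of _ "min \<rho> (e / (L + 1))"] conjI ballI impI)
      show "0 < min \<rho> (e / (L + 1))" using rho e L by auto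
      fix x assume x: "x \<in> UNIV" "x \<noteq> u \<and> dist x u < min \<rho> (e / (L + 1))"
      define n where "n = norm (x - u)"
      have n: "n > 0" "n < e / (L + 1)" using x by (auto simp: n_def dist_norm)
      have Ln: "L * n < e"
      proof -
        have "L * n \<le> (L+1) * n" using n by (simp add: mult_right_mono)
        also have "\<dots> < e" using n L by (simp add: field_simps)
        finally show ?thesis .
      qed
      have ge: "\<phi> x \<ge> ereal (c + inner v (x - u) - L * n^2)" using ineq x by (auto simp: n_def)
      show "y < (\<phi> x - \<phi> u - ereal (inner v (x - u))) / ereal (norm (x - u))"
      proof (cases "\<phi> x")
        case (real b)
        have "b \<ge> c + inner v (x - u) - L * n^2" using ge real by auto
        hence "(b - c - inner v (x - u)) / n \<ge> - L * n"
          using n by (simp add: field_simps power2_eq_square)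
        hence "(b - c - inner v (x - u)) / n > - e" using Ln by linarith
        hence "ereal (- e) < ereal ((b - c - inner v (x - u)) / n)" by simp
        with e(2) have "y < ereal ((b - c - inner v (x - u)) / n)" by (rule less_trans)
        thus ?thesis using real fin n by (simp add: n_def)
      next
        case PInf
        have "y \<noteq> \<infinity>" using y by auto
        thus ?thesis using PInf fin n by (simp add: n_def)
      next
        case MInf thus ?thesis using ge by simp
      qed
    qed
  qed
  thus ?thesis using fin by (simp add: regular_subdiff_def)
qed

lemma reg_imp_lim:
  assumes "v \<in> regular_subdiff \<phi> u" shows "v \<in> lim_subdiff \<phi> u"
proof -
  have "\<bar>\<phi> u\<bar> \<noteq> \<infinity>" using assms by (simp add: regular_subdiff_def)
  moreover have "(\<lambda>k::nat. u) \<longlonglongrightarrow> u \<and> (\<lambda>k::nat. \<phi> ((\<lambda>k. u) k)) \<longlonglongrightarrow> \<phi> u \<and>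
        (\<forall>k. (\<lambda>k. v) k \<in> regular_subdiff \<phi> ((\<lambda>k. u) k)) \<and> (\<lambda>k::nat. v) \<longlonglongrightarrow> v"
    using assms by simp
  ultimately show ?thesis unfolding lim_subdiff_def mem_Collect_eq
    by (intro conjI exI[of _ "\<lambda>k::nat. u"] exI[of _ "\<lambda>k::nat. v"]) auto
qed

lemma quad_identity:
  fixes x u y :: "'a::real_inner"
  shows "lam/2 * (norm (u - y))^2 - lam/2 * (norm (x - y))^2
        = inner (lam *\<^sub>R (y - u)) (x - u) - lam/2 * (norm (x - u))^2"
proof -
  have "(norm (x - y))^2 = (norm ((x - u) + (u - y)))^2" by simp
  also have "\<dots> = (norm (x - u))^2 + 2 * inner (x - u) (u - y) + (norm (u - y))^2"
    unfolding power2_norm_eq_inner inner_add_left inner_add_right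
    by (simp add: inner_commute[of "u - y" "x - u"])
  finally have e1: "(norm (x - y))^2 = (norm (x - u))^2 + 2 * inner (x - u) (u - y) + (norm (u - y))^2" .
  have e2: "inner (lam *\<^sub>R (y - u)) (x - u) = - lam * inner (x - u) (u - y)"
  proof -
    have "y - u = - (u - y)" by simp
    hence "inner (lam *\<^sub>R (y - u)) (x - u) = lam * inner (- (u - y)) (x - u)" by simp
    also have "\<dots> = - lam * inner (x - u) (u - y)" by (simp only: inner_minus_left inner_commute[of "u - y" "x - u"] mult_minus_left mult_minus_right)
    finally show ?thesis .
  qed
  show ?thesis unfolding e1 e2 by (simp add: algebra_simps)
qed

theorem theorem4p3:
  fixes \<phi> :: "'a::euclidean_space \<Rightarrow> ereal" and xb :: 'a
  assumes no_minus_inf: "\<And>x. \<phi> x \<noteq> -\<infinity>"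
    and dom: "xb \<in> edom \<phi>"
    and locmin: "local_minimizer \<phi> xb"
  shows "0 \<in> lim_subdiff \<phi> xb \<and>
    (prox_regular_at \<phi> xb 0 \<longrightarrow>
      (\<forall>w z. z \<in> combined_second_subdiff \<phi> xb 0 w \<longrightarrow> inner z w \<ge> 0))"
proof -
  obtain f0 where f0: "\<phi> xb = ereal f0"
    using dom no_minus_inf[of xb] unfolding edom_def by (cases "\<phi> xb") auto
  obtain r0 where r0: "r0 > 0" "\<And>x. dist x xb < r0 \<Longrightarrow> \<phi> xb \<le> \<phi> x"
    using locmin unfolding local_minimizer_def by blast
  have zero: "0 \<in> lim_subdiff \<phi> xb"
  proof (rule reg_imp_lim, rule regsub_from_quad[where \<phi>=\<phi> and u=xb and c=f0 and \<rho>=r0 and L=0, OF f0 r0(1)])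
    fix x assume "dist x xb < r0"
    thus "ereal (f0 + inner 0 (x - xb) - 0 * (norm (x - xb))\<^sup>2) \<le> \<phi> x" using r0 f0 by auto
  qed simp
  have part2: "inner z w \<ge> 0" if prox: "prox_regular_at \<phi> xb 0"
      and zw: "z \<in> combined_second_subdiff \<phi> xb 0 w" for z w
  proof (rule ccontr)
    assume neg: "\<not> inner z w \<ge> 0"
    hence zwn: "inner z w < 0" by simp
    obtain \<epsilon> where eps: "\<epsilon> > 0" and clE: "closed {(x, \<alpha>::real). dist x xb \<le> \<epsilon> \<and> \<alpha> \<le> f0 + \<epsilon> \<and> \<phi> x \<le> ereal \<alpha>}"
      using prox f0 unfolding prox_regular_at_def locally_lsc_at_def by auto
    define E where "E = {(x, \<alpha>::real). dist x xb \<le> \<epsilon> \<and> \<alpha> \<le> f0 + \<epsilon> \<and> \<phi> x \<le> ereal \<alpha>}"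
    define G where "G = graph_of (lim_subdiff \<phi>)"
    have xbG: "(xb, 0) \<in> G" using zero by (simp add: G_def graph_of_def)
    have "(z, - w) \<in> regular_subdiff (indicator_fun G) (xb, 0)"
      using zw by (simp add: combined_second_subdiff_def regular_coderiv_def regular_normal_cone_def G_def)
    hence lim: "0 \<le> Liminf (at (xb, 0)) (\<lambda>p. (indicator_fun G p - indicator_fun G (xb, 0)
          - ereal (inner (z, - w) (p - (xb, 0)))) / ereal (norm (p - (xb, 0))))"
      by (simp add: regular_subdiff_def)
    have wnz: "w \<noteq> 0" using zwn by auto
    have znz: "z \<noteq> 0" using zwn by auto
    define lam where "lam = - inner z w / (norm w)^2"
    have lam: "lam > 0" using zwn wnz by (auto simp: lam_def intro!: divide_neg_pos)
    have "(norm (z + lam *\<^sub>R w))^2 = (norm z)^2 + 2 * lam * inner z w + lam^2 * (norm w)^2"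
      unfolding power2_norm_eq_inner
      by (simp add: inner_add_left inner_add_right inner_commute[of w z] algebra_simps power2_eq_square)
    also have "\<dots> = (norm z)^2 - (inner z w)^2 / (norm w)^2"
      using wnz by (simp add: lam_def field_simps power2_eq_square)
    also have "\<dots> < (norm z)^2" using zwn wnz by simp
    finally have "norm (z + lam *\<^sub>R w) < norm z"
      by (meson norm_ge_zero power_less_imp_less_base)
    define s where "s = norm z - norm (z + lam *\<^sub>R w)"
    have s: "s > 0" using \<open>norm (z + lam *\<^sub>R w) < norm z\<close> by (simp add: s_def)
    define c0 where "c0 = s / (2 + lam)"
    have c0: "c0 > 0" using s lam by (simp add: c0_def)
    have "ereal (- c0) < 0" using c0 by simp
    with lim have "eventually (\<lambda>p. ereal (- c0) < (indicator_fun G p - indicator_fun G (xb, 0)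
          - ereal (inner (z, - w) (p - (xb, 0)))) / ereal (norm (p - (xb, 0)))) (at (xb, 0))"
      by (simp add: le_Liminf_iff)
    then obtain \<delta> where del: "\<delta> > 0" and delP: "\<And>p. p \<noteq> (xb, 0) \<Longrightarrow> dist p (xb, 0) < \<delta> \<Longrightarrow>
        ereal (- c0) < (indicator_fun G p - indicator_fun G (xb, 0)
          - ereal (inner (z, - w) (p - (xb, 0)))) / ereal (norm (p - (xb, 0)))"
      unfolding eventually_at by auto
    define \<rho> where "\<rho> = min \<epsilon> (r0 / 2)"
    have rho: "\<rho> > 0" "\<rho> \<le> \<epsilon>" "\<rho> < r0" using eps r0 by (auto simp: \<rho>_def)
    define a where "a = min (\<rho> / 4) (min (\<delta> / (2 * (2 + lam))) (min 1 (2 * \<epsilon> / lam)))"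
    have a: "a > 0" "2 * a < \<rho>" "(2 + lam) * a < \<delta>" "lam / 2 * a^2 \<le> \<epsilon>"
    proof -
      show "a > 0" using rho del lam eps by (simp add: a_def)
      show "2 * a < \<rho>" using rho by (simp add: a_def)
      have "a \<le> \<delta> / (2 * (2 + lam))" by (simp add: a_def)
      hence "(2 + lam) * a \<le> \<delta> / 2" using lam by (simp add: field_simps)
      thus "(2 + lam) * a < \<delta>" using del by simp
      have "a \<le> 1" "a \<le> 2 * \<epsilon> / lam" by (auto simp: a_def)
      hence "a^2 \<le> a" using \<open>a > 0\<close> by (simp add: power2_eq_square mult_le_cancel_left1)
      also have "\<dots> \<le> 2 * \<epsilon> / lam" by fact
      finally show "lam / 2 * a^2 \<le> \<epsilon>" using lam by (simp add: field_simps)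
    qed
    define t where "t = a / norm z"
    have t: "t > 0" "t * norm z = a" using a znz by (auto simp: t_def)
    define y where "y = xb + t *\<^sub>R z"
    have nxy: "norm (xb - y) = a" using t by (simp add: y_def)
    define q where "q = (\<lambda>x. lam / 2 * (norm (x - y))^2)"
    define C where "C = E \<inter> (cball xb \<rho> \<times> {f0..f0 + \<epsilon>})"
    have cC: "compact C" unfolding C_def using clE[folded E_def]
      by (intro closed_Int_compact compact_Times compact_cball compact_Icc)
    have xbC: "(xb, f0) \<in> C" using eps rho f0 by (simp add: C_def E_def)
    have "continuous_on C (\<lambda>p. snd p + q (fst p))" unfolding q_def by (intro continuous_intros)
    then obtain p0 where p0: "p0 \<in> C" and p0min: "\<And>p. p \<in> C \<Longrightarrow> snd p0 + q (fst p0) \<le> snd p + q (fst p)"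
      using continuous_attains_inf[OF cC] xbC by blast
    obtain u a0 where p0eq: "p0 = (u, a0)" by (cases p0)
    have ua0: "dist xb u \<le> \<rho>" "\<phi> u \<le> ereal a0" "f0 \<le> a0" "a0 \<le> f0 + \<epsilon>"
      using p0 by (auto simp: C_def E_def p0eq)
    have "\<phi> u \<ge> ereal f0" using r0(2)[of u] ua0(1) rho f0 by (simp add: dist_commute)
    then obtain b0 where b0: "\<phi> u = ereal b0" "f0 \<le> b0" "b0 \<le> a0"
      using ua0(2) by (cases "\<phi> u") auto
    have "(u, b0) \<in> C" using ua0 b0 rho by (auto simp: C_def E_def dist_commute)
    from p0min[OF this] have "a0 \<le> b0" by (simp add: p0eq)
    hence phiu: "\<phi> u = ereal a0" using b0 by simp
    have star: "a0 + q u \<le> f0 + q xb" using p0min[OF xbC] by (simp add: p0eq)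
    have "q u \<le> q xb" using star ua0(3) by simp
    hence "(norm (u - y))^2 \<le> (norm (xb - y))^2" using lam by (simp add: q_def)
    hence nuy: "norm (u - y) \<le> a" using nxy by (metis norm_ge_zero power2_le_imp_le)
    have B: "\<phi> x \<ge> ereal (a0 + q u - q x)" if "dist xb x \<le> \<rho>" for x
    proof (cases "\<phi> x")
      case (real b)
      have "\<phi> x \<ge> ereal f0" using r0(2)[of x] that rho f0 by (simp add: dist_commute)
      hence bf: "b \<ge> f0" using real by simp
      show ?thesis
      proof (cases "b \<le> f0 + \<epsilon>")
        case True
        hence "(x, b) \<in> C" using that rho bf real by (auto simp: C_def E_def dist_commute)
        from p0min[OF this] show ?thesis using real by (simp add: p0eq)
      next
        case False
        have "q xb \<le> \<epsilon>" using a nxy by (simp add: q_def)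
        moreover have "q x \<ge> 0" using lam by (simp add: q_def)
        ultimately show ?thesis using star False real by simp
      qed
    next
      case PInf thus ?thesis by simp
    next
      case MInf thus ?thesis using no_minus_inf by simp
    qed
    have duxb: "dist u xb \<le> 2 * a"
    proof -
      have "dist u xb = norm ((u - y) + (y - xb))" by (simp add: dist_norm)
      also have "\<dots> \<le> norm (u - y) + norm (y - xb)" by (rule norm_triangle_ineq)
      also have "\<dots> \<le> 2 * a" using nuy nxy by (simp add: norm_minus_commute)
      finally show ?thesis .
    qed
    define vv where "vv = lam *\<^sub>R (y - u)"
    have "vv \<in> regular_subdiff \<phi> u"
    proof (rule regsub_from_quad[where \<phi>=\<phi> and u=u and c=a0 and \<rho>="\<rho> - 2 * a" and L="lam / 2", OF phiu])
      show "0 < \<rho> - 2 * a" using a by simp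
      show "0 \<le> lam / 2" using lam by simp
      fix x assume "dist x u < \<rho> - 2 * a"
      hence dx: "dist xb x \<le> \<rho>" using duxb dist_triangle[of x xb u]
        by (simp add: dist_commute)
      have eq: "a0 + inner vv (x - u) - lam / 2 * (norm (x - u))\<^sup>2 = a0 + q u - q x"
        using quad_identity[of lam u y x] unfolding q_def vv_def by linarith
      from B[OF dx] show "ereal (a0 + inner vv (x - u) - lam / 2 * (norm (x - u))\<^sup>2) \<le> \<phi> x"
        unfolding eq .
    qed
    hence uG: "(u, vv) \<in> G" by (simp add: G_def graph_of_def reg_imp_lim)
    define g where "g = u - y"
    have ng: "norm g \<le> a" using nuy by (simp add: g_def)
    have e_eq: "u - xb = t *\<^sub>R z + g" by (simp add: g_def y_def)
    have vv_eq: "vv = - lam *\<^sub>R g" by (simp add: vv_def g_def algebra_simps)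
    define N where "N = inner z (u - xb) - inner w vv"
    have "N = t * (norm z)^2 + inner (z + lam *\<^sub>R w) g"
      by (simp add: N_def e_eq vv_eq inner_add_right inner_add_left power2_norm_eq_inner)
    also have "\<dots> \<ge> t * (norm z)^2 - norm (z + lam *\<^sub>R w) * a"
    proof -
      have "\<bar>inner (z + lam *\<^sub>R w) g\<bar> \<le> norm (z + lam *\<^sub>R w) * norm g" by (rule Cauchy_Schwarz_ineq2)
      also have "\<dots> \<le> norm (z + lam *\<^sub>R w) * a" using ng by (simp add: mult_left_mono)
      finally show ?thesis by linarith
    qed
    finally have N0: "N \<ge> t * (norm z)^2 - norm (z + lam *\<^sub>R w) * a" .
    have tz2: "t * (norm z)^2 = a * norm z" using t(2)[symmetric] by (simp add: power2_eq_square algebra_simps)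
    have "N \<ge> a * s" using N0 unfolding tz2 s_def by (simp add: algebra_simps)
    moreover have "c0 * ((2 + lam) * a) = a * s" using lam by (simp add: c0_def field_simps)
    ultimately have N1: "N \<ge> c0 * ((2 + lam) * a)" by linarith
    define n where "n = norm (u - xb, vv)"
    have "n \<le> norm (u - xb) + norm vv" unfolding n_def by (rule norm_Pair_le)
    also have "norm vv \<le> lam * a" using ng lam by (simp add: vv_eq mult_left_mono)
    hence "norm (u - xb) + norm vv \<le> (2 + lam) * a" using duxb by (simp add: dist_norm algebra_simps)
    finally have nle: "n \<le> (2 + lam) * a" by simp
    have "c0 * ((2 + lam) * a) > 0" using c0 lam a by simp
    hence Npos: "N > 0" using N1 by linarith
    have "n \<noteq> 0"
    proof
      assume "n = 0" hence "u - xb = 0" "vv = 0" by (auto simp: n_def zero_prod_def)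
      thus False using Npos by (simp add: N_def)
    qed
    hence npos: "n > 0" by (simp add: n_def)
    have ne: "(u, vv) \<noteq> (xb, 0)" using \<open>n \<noteq> 0\<close> by (auto simp: n_def zero_prod_def)
    have nz0: "(u - xb, vv) \<noteq> 0" using \<open>n \<noteq> 0\<close> by (auto simp: n_def)
    have "dist (u, vv) (xb, 0) = n" by (simp add: n_def dist_norm)
    hence "dist (u, vv) (xb, 0) < \<delta>" using nle a by simp
    from delP[OF ne this] have "ereal (- c0) < ereal (- N / n)"
      using uG xbG nz0 by (simp add: indicator_fun_def n_def N_def)
    hence "- c0 < - N / n" by simp
    moreover have "N / n \<ge> c0"
    proof -
      have "c0 * n \<le> c0 * ((2 + lam) * a)" using nle c0 by (simp add: mult_left_mono)
      hence "c0 * n \<le> N" using N1 by simp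
      thus ?thesis using npos by (simp add: field_simps)
    qed
    ultimately show False by simp
  qed
  show ?thesis
  proof (intro conjI impI allI)
    show "0 \<in> lim_subdiff \<phi> xb" by (rule zero)
  next
    fix w z
    assume "prox_regular_at \<phi> xb 0" "z \<in> combined_second_subdiff \<phi> xb 0 w"
    thus "inner z w \<ge> 0" by (rule part2)
  qed
qed

end
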